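(* Let $\Gamma$ be a Taylor graph with intersection array $\{k,b,1;1,b,k\}$, eigenvalues $\theta_0>\theta_1>\theta_2>\theta_3$, and vertex set $X$. Let $x\in X$ and let $W$ be an irreducible $T(x)$-module with endpoint $1$ and local eigenvalue $\lambda\in\{\sigma,\tau\}$. Then: (i) $W$ has diameter $1$ and is thin. (ii) For any nonzero $w_0\in E^*_1(x)W$, setting $w_1=E^*_2(x)Aw_0$, the pair $\{w_0,w_1\}$ is a basis for $W$, and the matrix representing $A$ with respect to this basis is $\begin{pmatrix}\lambda & (\lambda-\theta_t)^2\\ 1 & \lambda\end{pmatrix}$, where $t=1$ if $\lambda=\sigma$ and $t=2$ if $\lambda=\tau$. (iii) $\sigma=(\theta_1+\theta_2)/2$ and $\tau=(\theta_2+\theta_3)/2$.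
   Context: A Taylor graph is a distance-regular graph with intersection array $\{k,b,1;1,b,k\}$ where $b<k-1$; it has diameter $3$. With $\mathcal{D}=(k-2b-1)^2+4k$, its eigenvalues are $\theta_0=k$, $\theta_1=\frac{k-2b-1+\sqrt{\mathcal{D}}}{2}$, $\theta_2=-1$, $\theta_3=\frac{k-2b-1-\sqrt{\mathcal{D}}}{2}$. Define $\sigma=\frac{k-2b-3+\sqrt{\mathcal{D}}}{4}$ and $\tau=\frac{k-2b-3-\sqrt{\mathcal{D}}}{4}$. Let $A$ be the adjacency matrix, $\partial$ the distance, $V=\mathbb{C}^X$, and for $0\le i\le 3$ let $E^*_i(x)$ be the diagonal matrix with $(E^*_i(x))_{yy}=1$ if $\partial(x,y)=i$ and $0$ otherwise. $T(x)$ is the subalgebra of $\mathrm{Mat}_X(\mathbb{C})$ generated by $A,E^*_0(x),\dots,E^*_3(x)$. For an irreducible $T(x)$-module $W$ (a nonzero $T(x)$-invariant subspace of $V$ with no invariant subspaces other than $0,W$), its endpoint is $\min\{i:E^*_i(x)W\neq0\}$, its diameter is $|\{i:E^*_i(x)W\ne 0\}|-1$, and $W$ is thin if $\dim E^*_i(x)W\le 1$ for all $i$. An irreducible module $W$ with endpoint $1$ has local eigenvalue $\lambda$ if $E^*_1(x)W$ is one-dimensional and consists of eigenvectors of $E^*_1(x)AE^*_1(x)$ with eigenvalue $\lambda$. *)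

theory Defs
  imports Complex_Main "HOL-Library.Function_Algebras"
begin

text \<open>A graph on a finite vertex type 'a is given by a symmetric irreflexive
  adjacency relation E.\<close>

definition edge_rel :: "('a \<Rightarrow> 'a \<Rightarrow> bool) \<Rightarrow> ('a \<times> 'a) set" where
  "edge_rel E = {(u, v). E u v}"

definition graph_connected :: "('a \<Rightarrow> 'a \<Rightarrow> bool) \<Rightarrow> bool" where
  "graph_connected E \<longleftrightarrow> (\<forall>x y. \<exists>n. (x, y) \<in> edge_rel E ^^ n)"

text \<open>Path-length distance (meaningful for connected graphs).\<close>
definition gdist :: "('a \<Rightarrow> 'a \<Rightarrow> bool) \<Rightarrow> 'a \<Rightarrow> 'a \<Rightarrow> nat" where
  "gdist E x y = (LEAST n. (x, y) \<in> edge_rel E ^^ n)"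

text \<open>Distance-regular graph with intersection array
  {b_0,...,b_(d-1); c_1,...,c_d}, given as lists bs, cs of length d = diameter.\<close>
definition DRG_with_array ::
  "('a::finite \<Rightarrow> 'a \<Rightarrow> bool) \<Rightarrow> nat list \<Rightarrow> nat list \<Rightarrow> bool" where
  "DRG_with_array E bs cs \<longleftrightarrow>
     (\<forall>x y. E x y \<longrightarrow> E y x) \<and> (\<forall>x. \<not> E x x) \<and> graph_connected E \<and>
     length bs = length cs \<and>
     (\<forall>x y. gdist E x y \<le> length bs) \<and> (\<exists>x y. gdist E x y = length bs) \<and>
     (\<forall>x y. gdist E x y < length bs \<longrightarrow>
        card {z. E y z \<and> gdist E x z = gdist E x y + 1} = bs ! gdist E x y) \<and>
     (\<forall>x y. 0 < gdist E x y \<longrightarrow>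
        card {z. E y z \<and> gdist E x z = gdist E x y - 1} = cs ! (gdist E x y - 1))"

definition taylor_graph :: "('a::finite \<Rightarrow> 'a \<Rightarrow> bool) \<Rightarrow> nat \<Rightarrow> nat \<Rightarrow> bool" where
  "taylor_graph E k b \<longleftrightarrow> b + 1 < k \<and> DRG_with_array E [k, b, 1] [1, b, k]"

definition tD :: "nat \<Rightarrow> nat \<Rightarrow> real" where
  "tD k b = (real k - 2 * real b - 1)\<^sup>2 + 4 * real k"

definition theta0 :: "nat \<Rightarrow> nat \<Rightarrow> real" where "theta0 k b = real k"
definition theta1 :: "nat \<Rightarrow> nat \<Rightarrow> real" where
  "theta1 k b = (real k - 2 * real b - 1 + sqrt (tD k b)) / 2"
definition theta2 :: "nat \<Rightarrow> nat \<Rightarrow> real" where "theta2 k b = - 1"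
definition theta3 :: "nat \<Rightarrow> nat \<Rightarrow> real" where
  "theta3 k b = (real k - 2 * real b - 1 - sqrt (tD k b)) / 2"
definition tsigma :: "nat \<Rightarrow> nat \<Rightarrow> real" where
  "tsigma k b = (real k - 2 * real b - 3 + sqrt (tD k b)) / 4"
definition ttau :: "nat \<Rightarrow> nat \<Rightarrow> real" where
  "ttau k b = (real k - 2 * real b - 3 - sqrt (tD k b)) / 4"

definition cscale :: "complex \<Rightarrow> ('a \<Rightarrow> complex) \<Rightarrow> ('a \<Rightarrow> complex)" where
  "cscale c f = (\<lambda>y. c * f y)"

interpretation fvs: vector_space "cscale :: complex \<Rightarrow> ('a \<Rightarrow> complex) \<Rightarrow> _"
  by unfold_locales (auto simp: cscale_def fun_eq_iff algebra_simps)

definition adj_op :: "('a::finite \<Rightarrow> 'a \<Rightarrow> bool) \<Rightarrow> ('a \<Rightarrow> complex) \<Rightarrow> ('a \<Rightarrow> complex)" where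
  "adj_op E v = (\<lambda>y. \<Sum>z\<in>{z. E y z}. v z)"

definition Estar :: "('a \<Rightarrow> 'a \<Rightarrow> bool) \<Rightarrow> 'a \<Rightarrow> nat \<Rightarrow> ('a \<Rightarrow> complex) \<Rightarrow> ('a \<Rightarrow> complex)" where
  "Estar E x i v = (\<lambda>y. if gdist E x y = i then v y else 0)"

inductive_set Talg :: "('a::finite \<Rightarrow> 'a \<Rightarrow> bool) \<Rightarrow> 'a \<Rightarrow>
    (('a \<Rightarrow> complex) \<Rightarrow> ('a \<Rightarrow> complex)) set"
  for E x where
  gen_A: "adj_op E \<in> Talg E x"
| gen_E: "i \<le> 3 \<Longrightarrow> Estar E x i \<in> Talg E x"
| one: "(\<lambda>v. v) \<in> Talg E x"
| add: "M \<in> Talg E x \<Longrightarrow> N \<in> Talg E x \<Longrightarrow> (\<lambda>v. M v + N v) \<in> Talg E x"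
| smult: "M \<in> Talg E x \<Longrightarrow> (\<lambda>v. cscale c (M v)) \<in> Talg E x"
| mult: "M \<in> Talg E x \<Longrightarrow> N \<in> Talg E x \<Longrightarrow> (\<lambda>v. M (N v)) \<in> Talg E x"

definition T_module :: "('a::finite \<Rightarrow> 'a \<Rightarrow> bool) \<Rightarrow> 'a \<Rightarrow> ('a \<Rightarrow> complex) set \<Rightarrow> bool" where
  "T_module E x W \<longleftrightarrow> fvs.subspace W \<and> (\<forall>M\<in>Talg E x. M ` W \<subseteq> W)"

definition irreducible_T_module ::
  "('a::finite \<Rightarrow> 'a \<Rightarrow> bool) \<Rightarrow> 'a \<Rightarrow> ('a \<Rightarrow> complex) set \<Rightarrow> bool" where
  "irreducible_T_module E x W \<longleftrightarrow> T_module E x W \<and> W \<noteq> {0} \<and>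
     (\<forall>U. T_module E x U \<and> U \<subseteq> W \<longrightarrow> U = {0} \<or> U = W)"

definition module_support :: "('a \<Rightarrow> 'a \<Rightarrow> bool) \<Rightarrow> 'a \<Rightarrow> ('a \<Rightarrow> complex) set \<Rightarrow> nat set" where
  "module_support E x W = {i. i \<le> 3 \<and> Estar E x i ` W \<noteq> {0}}"

definition module_endpoint :: "('a \<Rightarrow> 'a \<Rightarrow> bool) \<Rightarrow> 'a \<Rightarrow> ('a \<Rightarrow> complex) set \<Rightarrow> nat" where
  "module_endpoint E x W = Min (module_support E x W)"

definition module_diameter :: "('a \<Rightarrow> 'a \<Rightarrow> bool) \<Rightarrow> 'a \<Rightarrow> ('a \<Rightarrow> complex) set \<Rightarrow> nat" where
  "module_diameter E x W = card (module_support E x W) - 1"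

definition module_thin :: "('a \<Rightarrow> 'a \<Rightarrow> bool) \<Rightarrow> 'a \<Rightarrow> ('a \<Rightarrow> complex) set \<Rightarrow> bool" where
  "module_thin E x W \<longleftrightarrow> (\<forall>i\<le>3. fvs.dim (Estar E x i ` W) \<le> 1)"

definition has_local_eigenvalue ::
  "('a::finite \<Rightarrow> 'a \<Rightarrow> bool) \<Rightarrow> 'a \<Rightarrow> ('a \<Rightarrow> complex) set \<Rightarrow> complex \<Rightarrow> bool" where
  "has_local_eigenvalue E x W lam \<longleftrightarrow>
     fvs.dim (Estar E x 1 ` W) = 1 \<and>
     (\<forall>v\<in>Estar E x 1 ` W. v \<noteq> 0 \<longrightarrow>
        Estar E x 1 (adj_op E (Estar E x 1 v)) = cscale lam v)"

end

theory Submission imports Defs begin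

lemma relpow_sym_edge:
  assumes "\<And>u v. E u v \<Longrightarrow> E v u"
  shows "(x,y) \<in> edge_rel E ^^ n \<Longrightarrow> (y,x) \<in> edge_rel E ^^ n"
proof (induction n arbitrary: y)
  case 0 thus ?case by simp
next
  case (Suc n)
  from Suc.prems obtain z where z: "(x,z) \<in> edge_rel E ^^ n" "(z,y) \<in> edge_rel E" by auto
  have "(z,x) \<in> edge_rel E ^^ n" using Suc.IH z(1) .
  moreover have "(y,z) \<in> edge_rel E" using z(2) assms by (auto simp: edge_rel_def)
  ultimately show ?case using relpow_Suc_I2 by metis
qed

lemma card_filter_sum:
  assumes "finite T"
  shows "card {z\<in>T. P z} = (\<Sum>z\<in>T. if P z then 1 else 0)"
  using assms by (simp add: sum.If_cases Int_def)

lemma double_count: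
  fixes S T :: "'a::finite set"
  shows "(\<Sum>y\<in>S. card {z\<in>T. R y z}) = (\<Sum>z\<in>T. card {y\<in>S. R y z})"
proof -
  have "(\<Sum>y\<in>S. card {z\<in>T. R y z}) = (\<Sum>y\<in>S. \<Sum>z\<in>T. if R y z then 1 else 0)"
    by (simp add: card_filter_sum)
  also have "\<dots> = (\<Sum>z\<in>T. \<Sum>y\<in>S. if R y z then 1 else 0)" by (rule sum.swap)
  also have "\<dots> = (\<Sum>z\<in>T. card {y\<in>S. R y z})"
    by (simp add: card_filter_sum)
  finally show ?thesis .
qed

locale tay =
  fixes E :: "'a::finite \<Rightarrow> 'a \<Rightarrow> bool" and k b :: nat
  assumes tg: "taylor_graph E k b"
begin

abbreviation "d \<equiv> gdist E"

lemma sym: "E u v \<Longrightarrow> E v u" using tg unfolding taylor_graph_def DRG_with_array_def by blast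
lemma irr: "\<not> E u u" using tg unfolding taylor_graph_def DRG_with_array_def by blast
lemma kb: "b + 1 < k" using tg unfolding taylor_graph_def by blast
lemma conn: "\<exists>n. (u,v) \<in> edge_rel E ^^ n"
  using tg unfolding taylor_graph_def DRG_with_array_def graph_connected_def by blast
lemma attain: "(u,v) \<in> edge_rel E ^^ d u v"
  unfolding gdist_def using conn by (rule LeastI_ex)
lemma dle: "(u,v) \<in> edge_rel E ^^ n \<Longrightarrow> d u v \<le> n"
  unfolding gdist_def by (rule Least_le)
lemma d_refl[simp]: "d u u = 0" using dle[of u u 0] by simp
lemma d0: "d u v = 0 \<longleftrightarrow> u = v" using attain[of u v] by auto
lemma d1: "d u v = 1 \<longleftrightarrow> E u v"
proof
  assume "d u v = 1" thus "E u v" using attain[of u v] by (auto simp: edge_rel_def)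
next
  assume e: "E u v"
  hence "(u,v) \<in> edge_rel E ^^ 1" by (simp add: edge_rel_def)
  hence "d u v \<le> 1" by (rule dle)
  moreover have "u \<noteq> v" using e irr by auto
  ultimately show "d u v = 1" using d0[of u v] by linarith
qed
lemma dsym: "d u v = d v u"
proof -
  have "d v u \<le> d u v" by (rule dle, rule relpow_sym_edge[OF sym attain])
  moreover have "d u v \<le> d v u" by (rule dle, rule relpow_sym_edge[OF sym attain])
  ultimately show ?thesis by simp
qed
lemma step: "E v w \<Longrightarrow> d u w \<le> d u v + 1"
proof -
  assume "E v w"
  hence "(u,w) \<in> edge_rel E ^^ Suc (d u v)"
    using attain[of u v] by (auto intro: relpow_Suc_I simp: edge_rel_def)
  thus ?thesis using dle by fastforce
qed
lemma step2: "E v w \<Longrightarrow> d u v \<le> d u w + 1" using step[OF sym] .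
lemma pred: "d u w = Suc n \<Longrightarrow> \<exists>v. E v w \<and> d u v = n"
proof -
  assume a: "d u w = Suc n"
  then obtain v where v: "(u,v) \<in> edge_rel E ^^ n" "(v,w) \<in> edge_rel E"
    using attain[of u w] by auto
  have "E v w" using v(2) by (simp add: edge_rel_def)
  moreover have "d u v \<le> n" using v(1) by (rule dle)
  moreover have "d u w \<le> d u v + 1" using \<open>E v w\<close> by (rule step)
  ultimately show ?thesis using a by (intro exI[of _ v]) auto
qed
lemma le3: "d u v \<le> 3" using tg unfolding taylor_graph_def DRG_with_array_def by (auto simp: numeral_3_eq_3)
lemma ex3: "\<exists>u v. d u v = 3" using tg unfolding taylor_graph_def DRG_with_array_def by (auto simp: numeral_3_eq_3)
lemma bc: "d u v < 3 \<Longrightarrow> card {z. E v z \<and> d u z = d u v + 1} = [k,b,1] ! d u v"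
  using tg unfolding taylor_graph_def DRG_with_array_def by auto
lemma cc: "0 < d u v \<Longrightarrow> card {z. E v z \<and> d u z = d u v - 1} = [1,b,k] ! (d u v - 1)"
  using tg unfolding taylor_graph_def DRG_with_array_def by auto

lemma deg: "card {z. E u z} = k"
  using bc[of u u] d1[of u] by simp
lemma b1: "d u v = 1 \<Longrightarrow> card {z. E v z \<and> d u z = 2} = b"
  using bc[of u v] by (simp add: numeral_2_eq_2)
lemma b2: "d u v = 2 \<Longrightarrow> card {z. E v z \<and> d u z = 3} = 1"
  using bc[of u v] by simp
lemma c2: "d u v = 2 \<Longrightarrow> card {z. E v z \<and> d u z = 1} = b"
  using cc[of u v] by simp
lemma c3: "d u v = 3 \<Longrightarrow> card {z. E v z \<and> d u z = 2} = k"
  using cc[of u v] by simp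

lemma c3all: "d u v = 3 \<Longrightarrow> E v z \<Longrightarrow> d u z = 2"
proof -
  assume a: "d u v = 3" "E v z"
  have "{z. E v z \<and> d u z = 2} \<subseteq> {z. E v z}" by auto
  moreover have "card {z. E v z \<and> d u z = 2} = card {z. E v z}" using c3[OF a(1)] deg by simp
  ultimately have "{z. E v z \<and> d u z = 2} = {z. E v z}" by (intro card_subset_eq) auto
  thus ?thesis using a(2) by auto
qed

lemma b_pos: "0 < b"
proof -
  obtain u v where "d u v = 3" using ex3 by blast
  then obtain w where w: "E w v" "d u w = 2" using pred[of u v 2] by auto
  then obtain z where z: "E z w" "d u z = 1" using pred[of u w 1] by auto
  have "card {z. E w z \<and> d u z = 1} > 0" using z sym by (auto simp: card_gt_0_iff)
  thus ?thesis using c2[OF w(2)] by simp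
qed

lemma CN: "card {z. E u z \<and> E z v} =
   (if d u v = 0 then k else if d u v = 1 then k - b - 1 else if d u v = 2 then b else 0)"
proof -
  have "d u v = 0 \<or> d u v = 1 \<or> d u v = 2 \<or> d u v = 3" using le3[of u v] by auto
  moreover
  { assume "d u v = 0"
    hence "u = v" using d0 by auto
    hence ?thesis using deg[of u] sym by (auto cong: conj_cong) }
  moreover
  { assume h: "d u v = 1"
    have eq: "{z. E u z \<and> E z v} = {z. E v z \<and> d u z = 1}" using d1 sym by auto
    have part: "{z. E v z} = {z. E v z \<and> d u z = 0} \<union> {z. E v z \<and> d u z = 1} \<union> {z. E v z \<and> d u z = 2}"
      using step[of v _ u] step2[of v _ u] h by fastforce
    have s0: "{z. E v z \<and> d u z = 0} = {u}" using d0 h d1 sym by auto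
    have "k = card {z. E v z}" using deg by simp
    also have "\<dots> = 1 + card {z. E v z \<and> d u z = 1} + b"
      unfolding part s0 using b1[OF h]
      by (subst card_Un_disjoint; auto simp: card_Un_disjoint)
    finally have ?thesis using h eq by simp }
  moreover
  { assume h: "d u v = 2"
    have eq: "{z. E u z \<and> E z v} = {z. E v z \<and> d u z = 1}" using d1 sym by auto
    have ?thesis using h eq c2[OF h] by simp }
  moreover
  { assume h: "d u v = 3"
    have "{z. E u z \<and> E z v} = {}"
    proof (rule ccontr)
      assume "{z. E u z \<and> E z v} \<noteq> {}"
      then obtain z where "E u z" "E z v" by auto
      hence "d u z = 1" "E z v" using d1 by auto
      hence "d u v \<le> 2" using step[of z v u] by simp
      thus False using h by simp
    qed
    hence ?thesis using h by simp }
  ultimately show ?thesis by blast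
qed

lemma card_G1: "card {v. d u v = 1} = k" using deg d1 by simp

lemma card_G2: "card {v. d u v = 2} = k"
proof -
  have "(\<Sum>y\<in>{v. d u v = 1}. card {z\<in>{v. d u v = 2}. E y z}) =
        (\<Sum>z\<in>{v. d u v = 2}. card {y\<in>{v. d u v = 1}. E y z})" by (rule double_count)
  moreover have "\<And>y. y \<in> {v. d u v = 1} \<Longrightarrow> card {z\<in>{v. d u v = 2}. E y z} = b"
    using b1 by (simp add: conj_commute)
  moreover have "\<And>z. z \<in> {v. d u v = 2} \<Longrightarrow> card {y\<in>{v. d u v = 1}. E y z} = b"
  proof -
    fix z assume "z \<in> {v. d u v = 2}"
    moreover have "{y\<in>{v. d u v = 1}. E y z} = {y. E z y \<and> d u y = 1}" using sym by blast
    ultimately show "card {y\<in>{v. d u v = 1}. E y z} = b" using c2 by simp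
  qed
  ultimately have "card {v. d u v = 1} * b = card {v. d u v = 2} * b" by simp
  thus ?thesis using b_pos card_G1 by simp
qed

lemma card_G3: "card {v. d u v = 3} = 1"
proof -
  have "(\<Sum>y\<in>{v. d u v = 2}. card {z\<in>{v. d u v = 3}. E y z}) =
        (\<Sum>z\<in>{v. d u v = 3}. card {y\<in>{v. d u v = 2}. E y z})" by (rule double_count)
  moreover have "\<And>y. y \<in> {v. d u v = 2} \<Longrightarrow> card {z\<in>{v. d u v = 3}. E y z} = 1"
    using b2 by (simp add: conj_commute)
  moreover have "\<And>z. z \<in> {v. d u v = 3} \<Longrightarrow> card {y\<in>{v. d u v = 2}. E y z} = k"
  proof -
    fix z assume "z \<in> {v. d u v = 3}"
    moreover have "{y\<in>{v. d u v = 2}. E y z} = {y. E z y \<and> d u y = 2}" using sym by blast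
    ultimately show "card {y\<in>{v. d u v = 2}. E y z} = k" using c3 by simp
  qed
  ultimately have "card {v. d u v = 2} = card {v. d u v = 3} * k" by simp
  thus ?thesis using kb card_G2 by simp
qed

lemma antipode: "\<exists>!v. d u v = 3"
  using card_G3[of u] by (metis (mono_tags, lifting) card_1_singletonE mem_Collect_eq singletonD singletonI)


lemma A_sum: "adj_op E f y = (\<Sum>z\<in>UNIV. if E y z then f z else 0)"
  unfolding adj_op_def by (simp add: sum.If_cases Int_def)

lemma AA: "adj_op E (adj_op E f) y = (\<Sum>v\<in>UNIV. of_nat (card {z. E y z \<and> E z v}) * f v)"
proof -
  have "adj_op E (adj_op E f) y = (\<Sum>z\<in>UNIV. \<Sum>v\<in>UNIV. if E y z \<and> E z v then f v else 0)"
    unfolding A_sum[of _ y] by (rule sum.cong) (auto simp: A_sum)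
  also have "\<dots> = (\<Sum>v\<in>UNIV. \<Sum>z\<in>UNIV. if E y z \<and> E z v then f v else 0)" by (rule sum.swap)
  also have "\<dots> = (\<Sum>v\<in>UNIV. of_nat (card {z. E y z \<and> E z v}) * f v)"
    by (rule sum.cong) (auto simp: sum.If_cases Int_def)
  finally show ?thesis .
qed

lemma CNc: "(of_nat (card {z. E u z \<and> E z v}) :: complex) =
   (if d u v = 0 then of_nat k else if d u v = 1 then of_nat k - of_nat b - 1
    else if d u v = 2 then of_nat b else 0)"
  using CN[of u v] kb by (auto simp: of_nat_diff)

lemma main:
  fixes x :: 'a and w0 :: "'a \<Rightarrow> complex" and lam :: complex
  assumes supp: "\<And>v. d x v \<noteq> 1 \<Longrightarrow> w0 v = 0"
  and s0: "(\<Sum>v\<in>UNIV. w0 v) = 0"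
  and eig: "\<And>t. d x t = 1 \<Longrightarrow> adj_op E w0 t = lam * w0 t"
  and quad: "2*lam^2 - (of_nat k - 2*of_nat b - 3)*lam - (of_nat k - of_nat b - 1) = 0"
  shows "adj_op E w0 = cscale lam w0 + Estar E x 2 (adj_op E w0)"
    and "adj_op E (Estar E x 2 (adj_op E w0)) =
           cscale ((1+lam)^2) w0 + cscale lam (Estar E x 2 (adj_op E w0))"
    and "w0 \<noteq> 0 \<Longrightarrow> 1 + lam \<noteq> 0 \<Longrightarrow> Estar E x 2 (adj_op E w0) \<noteq> 0"
proof -
  define w1 where "w1 = Estar E x 2 (adj_op E w0)"
  define Aw where "Aw = adj_op E w0"
  have w1y: "w1 y = (if d x y = 2 then Aw y else 0)" for y
    unfolding w1_def Aw_def Estar_def by simp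
  have dcases: "d u v = 0 \<or> d u v = 1 \<or> d u v = 2 \<or> d u v = 3" for u v using le3[of u v] by auto
  have P0: "Aw x = 0"
  proof -
    have "Aw x = (\<Sum>z\<in>UNIV. if E x z then w0 z else 0)" unfolding Aw_def A_sum ..
    also have "\<dots> = (\<Sum>z\<in>UNIV. w0 z)" by (rule sum.cong) (auto, metis supp d1)
    finally show ?thesis using s0 by simp
  qed
  have P3: "Aw y = 0" if "d x y = 3" for y
  proof -
    have "Aw y = (\<Sum>z\<in>UNIV. if E y z then w0 z else 0)" unfolding Aw_def A_sum ..
    also have "\<dots> = 0"
    proof (intro sum.neutral ballI)
      fix z assume "z \<in> (UNIV::'a set)"
      show "(if E y z then w0 z else 0) = 0"
      proof (cases "E y z")
        case True
        hence "d x y \<le> d x z + 1" by (rule step2)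
        thus ?thesis using that supp[of z] by auto
      qed simp
    qed
    finally show ?thesis by simp
  qed
  have I: "Aw y = lam * w0 y + w1 y" for y
    using dcases[of x y] P0 P3[of y] eig[of y] supp[of y] w1y[of y] d0[of x y] by (auto simp: Aw_def)
  show "adj_op E w0 = cscale lam w0 + Estar E x 2 (adj_op E w0)"
    using I unfolding Aw_def w1_def by (auto simp: cscale_def fun_eq_iff)
  define al where "al y = (THE v. d y v = 3)" for y
  have al1: "d y (al y) = 3" for y unfolding al_def by (rule theI', rule antipode)
  have al_uniq: "d y v = 3 \<Longrightarrow> v = al y" for y v using al1 antipode by blast
  have al2: "E x (al y)" if "d x y = 2" for y
  proof -
    have "d y x = 2" using that dsym by simp
    hence "card {z. E x z \<and> d y z = 3} = 1" by (rule b2)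
    then obtain z where "E x z" "d y z = 3" by (metis (mono_tags, lifting) One_nat_def card_1_singletonE mem_Collect_eq singletonI)
    thus ?thesis using al_uniq by auto
  qed
  have al3: "E y v \<longleftrightarrow> \<not> E (al y) v" if y2: "d x y = 2" and v: "E x v" "v \<noteq> al y" for y v
  proof -
    define S1 where "S1 = {z. E x z \<and> E z (al y)}"
    define S2 where "S2 = {z. E x z} - ({al y} \<union> {z. E x z \<and> E z y})"
    have xa: "d x (al y) = 1" using al2[OF y2] d1 by simp
    have cS1: "card S1 = k - b - 1" unfolding S1_def using CN[of x "al y"] xa by simp
    have nya: "\<not> E (al y) y" using al1[of y] d1 dsym by (metis numeral_eq_one_iff semiring_norm(84))
    have cB: "card {z. E x z \<and> E z y} = b" using CN[of x y] y2 by simp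
    have "card ({al y} \<union> {z. E x z \<and> E z y}) = 1 + b"
      using cB nya by (subst card_Un_disjoint) auto
    moreover have "{al y} \<union> {z. E x z \<and> E z y} \<subseteq> {z. E x z}" using al2[OF y2] by auto
    ultimately have cS2: "card S2 = k - b - 1" unfolding S2_def
      by (simp add: card_Diff_subset deg)
    have sub: "S1 \<subseteq> S2"
    proof
      fix z assume z: "z \<in> S1"
      hence ez: "E x z" "E z (al y)" unfolding S1_def by auto
      have "z \<noteq> al y" using ez irr by auto
      moreover have "\<not> E z y"
      proof
        assume "E z y"
        hence "d y z = 1" using d1 sym by auto
        hence "d y (al y) \<le> 2" using step[OF ez(2), of y] by simp
        thus False using al1[of y] by simp
      qed
      ultimately show "z \<in> S2" unfolding S2_def using ez by auto
    qed
    have "S1 = S2" using sub cS1 cS2 by (intro card_subset_eq) auto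
    hence "v \<in> S1 \<longleftrightarrow> v \<in> S2" by simp
    thus ?thesis unfolding S1_def S2_def using v sym by auto
  qed
  have al4: "Aw y = - (1 + lam) * w0 (al y)" if y2: "d x y = 2" for y
  proof -
    have pw: "(if E y v then w0 v else 0) = w0 v - (if v = al y then w0 v else 0)
               - (if E (al y) v then w0 v else 0)" for v
    proof (cases "d x v = 1")
      case False thus ?thesis using supp[of v] by auto
    next
      case True
      hence ev: "E x v" using d1 by simp
      show ?thesis
      proof (cases "v = al y")
        case True
        have "\<not> E y (al y)" using al1[of y] d1 by (metis numeral_eq_one_iff semiring_norm(84))
        thus ?thesis using True irr by simp
      next
        case False
        thus ?thesis using al3[OF y2 ev False] by auto
      qed
    qed
    have "Aw y = (\<Sum>v\<in>UNIV. if E y v then w0 v else 0)" unfolding Aw_def A_sum ..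
    also have "\<dots> = (\<Sum>v\<in>UNIV. w0 v) - w0 (al y) - Aw (al y)"
      unfolding pw Aw_def A_sum[of _ "al y"] by (simp add: sum_subtractf)
    also have "\<dots> = - (1 + lam) * w0 (al y)"
    proof -
      have "d x (al y) = 1" using al2[OF y2] d1 by simp
      thus ?thesis using s0 I[of "al y"] w1y[of "al y"] by (simp add: algebra_simps)
    qed
    finally show ?thesis .
  qed
  have al5: "\<exists>y. d x y = 2 \<and> al y = t" if t1: "d x t = 1" for t
  proof -
    obtain t' where t': "d t t' = 3" using antipode by blast
    have ext: "E x t" using t1 d1 by simp
    have "d t' t \<le> d t' x + 1" using step[OF ext] .
    hence ge: "d x t' \<ge> 2" using t' dsym by simp
    have "d x t' \<noteq> 3"
    proof
      assume "d x t' = 3"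
      hence "d t' t = 2" using c3all[of t' x t] ext dsym by simp
      thus False using t' dsym by simp
    qed
    hence "d x t' = 2" using ge le3[of x t'] by simp
    moreover have "al t' = t" using al_uniq[of t' t] t' dsym by simp
    ultimately show ?thesis by blast
  qed
  have Aw1: "adj_op E w1 y = adj_op E Aw y - lam * Aw y" for y
  proof -
    have "adj_op E w1 y = (\<Sum>z\<in>UNIV. if E y z then Aw z - lam * w0 z else 0)"
      unfolding A_sum using I by (intro sum.cong) auto
    also have "\<dots> = (\<Sum>z\<in>UNIV. if E y z then Aw z else 0) - lam * (\<Sum>z\<in>UNIV. if E y z then w0 z else 0)"
      by (simp add: sum_distrib_left flip: sum_subtractf) (intro sum.cong, auto)
    finally show ?thesis unfolding A_sum Aw_def .
  qed
  have AAy: "adj_op E Aw y = (\<Sum>v\<in>UNIV. of_nat (card {z. E y z \<and> E z v}) * w0 v)" for y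
    unfolding Aw_def by (rule AA)
  have qd: "(1+lam)^2 - ((of_nat k - of_nat b) + (of_nat k - 2*of_nat b - 1)*lam - lam^2)
     = 2*lam^2 - (of_nat k - 2*of_nat b - 3)*lam - (of_nat k - of_nat b - 1)"
    by (simp add: algebra_simps power2_eq_square)
  have qd2: "2*lam*(1+lam) - (of_nat k - 2*of_nat b - 1)*(1+lam) - of_nat b
     = 2*lam^2 - (of_nat k - 2*of_nat b - 3)*lam - (of_nat k - of_nat b - 1)"
    by (simp add: algebra_simps power2_eq_square)
  have II: "adj_op E w1 y = (1+lam)^2 * w0 y + lam * w1 y" for y
  proof -
    consider "d x y = 0" | "d x y = 1" | "d x y = 2" | "d x y = 3" using dcases[of x y] by metis
    thus ?thesis
    proof cases
      case 1
      hence yx: "y = x" using d0 by simp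
      have pw: "of_nat (card {z. E y z \<and> E z v}) * w0 v = (of_nat k - of_nat b - 1) * w0 v" for v
      proof (cases "d x v = 1")
        case True thus ?thesis using CNc[of y v] yx by simp
      qed (use supp in auto)
      have "adj_op E w1 y = 0"
        unfolding Aw1 AAy pw using s0 P0 yx by (simp flip: sum_distrib_left)
      moreover have "w0 y = 0" "w1 y = 0" using supp[of y] w1y[of y] 1 by auto
      ultimately show ?thesis by simp
    next
      case 2
      have pw: "of_nat (card {z. E y z \<and> E z v}) * w0 v =
         (of_nat k - of_nat b) * (if v = y then w0 v else 0)
         + (of_nat k - 2*of_nat b - 1) * (if E y v then w0 v else 0) + of_nat b * w0 v" for v
      proof (cases "d x v = 1")
        case True
        hence "E x v" using d1 by simp
        hence "d y v \<le> d y x + 1" by (rule step)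
        hence "d y v \<le> 2" using 2 dsym by simp
        hence "d y v = 0 \<or> d y v = 1 \<or> d y v = 2" by auto
        moreover have "d y v = 0 \<longleftrightarrow> v = y" using d0 by auto
        moreover have "d y v = 1 \<longleftrightarrow> E y v" using d1 by auto
        ultimately show ?thesis using CNc[of y v] irr[of y]
          by (auto simp: algebra_simps)
      qed (use supp in auto)
      have "adj_op E Aw y = (of_nat k - of_nat b) * w0 y + (of_nat k - 2*of_nat b - 1) * Aw y"
        unfolding AAy pw using s0
        by (simp add: sum.distrib Aw_def A_sum flip: sum_distrib_left)
      moreover have "Aw y = lam * w0 y" using eig[OF 2] Aw_def by simp
      moreover have "w1 y = 0" using w1y[of y] 2 by simp
      ultimately have "adj_op E w1 y = ((of_nat k - of_nat b) + (of_nat k - 2*of_nat b - 1)*lam - lam^2) * w0 y"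
        unfolding Aw1 by (simp add: algebra_simps power2_eq_square)
      also have "(of_nat k - of_nat b) + (of_nat k - 2*of_nat b - 1)*lam - lam^2 = (1+lam)^2"
        using qd quad by simp
      finally show ?thesis using \<open>w1 y = 0\<close> by simp
    next
      case 3
      have pw: "of_nat (card {z. E y z \<and> E z v}) * w0 v =
         (of_nat k - 2*of_nat b - 1) * (if E y v then w0 v else 0)
         - of_nat b * (if v = al y then w0 v else 0) + of_nat b * w0 v" for v
      proof (cases "d x v = 1")
        case True
        have "y \<noteq> v" using True 3 by auto
        hence "d y v \<noteq> 0" using d0 by simp
        hence "d y v = 1 \<or> d y v = 2 \<or> d y v = 3" using le3[of y v] by auto
        moreover have "d y v = 3 \<longleftrightarrow> v = al y" using al_uniq al1 by auto
        moreover have "d y v = 1 \<longleftrightarrow> E y v" using d1 by auto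
        ultimately show ?thesis using CNc[of y v]
          by (auto simp: algebra_simps)
      qed (use supp in auto)
      have e0: "adj_op E Aw y = (of_nat k - 2*of_nat b - 1) * Aw y - of_nat b * w0 (al y)"
        unfolding AAy pw using s0
        by (simp add: sum.distrib sum_subtractf Aw_def A_sum flip: sum_distrib_left)
      have e2: "Aw y = - (1 + lam) * w0 (al y)" using al4[OF 3] .
      have e3: "w1 y = Aw y" using w1y[of y] 3 by simp
      have e4: "w0 y = 0" using supp[of y] 3 by simp
      have "adj_op E w1 y - ((1+lam)^2 * w0 y + lam * w1 y) =
         (of_nat k - 2*of_nat b - 1) * (- (1 + lam) * w0 (al y)) - of_nat b * w0 (al y)
          - lam * (- (1 + lam) * w0 (al y)) - lam * (- (1 + lam) * w0 (al y))"
        unfolding Aw1 e0 e3 e4 e2 by simp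
      also have "\<dots> = w0 (al y) * (2*lam*(1+lam) - (of_nat k - 2*of_nat b - 1)*(1+lam) - of_nat b)"
        by (simp add: algebra_simps)
      also have "\<dots> = 0" using qd2 quad by simp
      finally show ?thesis by simp
    next
      case 4
      have pw: "of_nat (card {z. E y z \<and> E z v}) * w0 v = of_nat b * w0 v" for v
      proof (cases "d x v = 1")
        case True
        hence "E x v" using d1 by simp
        hence "d y v = 2" using c3all[of y x v] 4 dsym by simp
        thus ?thesis using CNc[of y v] by simp
      qed (use supp in auto)
      have "adj_op E w1 y = 0"
        unfolding Aw1 AAy pw using s0 P3[OF 4] by (simp flip: sum_distrib_left)
      moreover have "w0 y = 0" "w1 y = 0" using supp[of y] w1y[of y] 4 by auto
      ultimately show ?thesis by simp
    qed
  qed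
  show "adj_op E (Estar E x 2 (adj_op E w0)) =
           cscale ((1+lam)^2) w0 + cscale lam (Estar E x 2 (adj_op E w0))"
    using II unfolding w1_def by (auto simp: cscale_def fun_eq_iff)
  show "Estar E x 2 (adj_op E w0) \<noteq> 0" if nz: "w0 \<noteq> 0" and nl: "1 + lam \<noteq> 0"
  proof -
    obtain t where t: "w0 t \<noteq> 0" using nz by (auto simp: fun_eq_iff)
    hence "d x t = 1" using supp by blast
    then obtain y where y: "d x y = 2" "al y = t" using al5 by blast
    have "w1 y = - (1 + lam) * w0 t" using w1y[of y] y al4[OF y(1)] by simp
    moreover have "- (1 + lam) * w0 t \<noteq> 0" using t nl by (metis mult_eq_0_iff neg_equal_0_iff_equal)
    ultimately have "w1 y \<noteq> 0" by simp
    thus ?thesis unfolding w1_def by auto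
  qed
qed
end

lemma adj_lin: "adj_op E (cscale a f + cscale c g) = cscale a (adj_op E f) + cscale c (adj_op E g)"
  by (simp add: adj_op_def cscale_def fun_eq_iff sum.distrib sum_distrib_left)

lemma est_lin: "Estar E x i (cscale a f + cscale c g) = cscale a (Estar E x i f) + cscale c (Estar E x i g)"
  by (simp add: Estar_def cscale_def fun_eq_iff)

lemma span2: "fvs.span {p, q} = {cscale a p + cscale c q | a c. True}"
proof -
  have "fvs.span {p, q} = {v. \<exists>a. v - cscale a p \<in> fvs.span {q}}" by (rule fvs.span_insert)
  also have "\<dots> = {v. \<exists>a c. v - cscale a p = cscale c q}" by (auto simp: fvs.span_singleton)
  also have "\<dots> = {cscale a p + cscale c q | a c. True}" by (auto simp: diff_eq_eq add.commute)
  finally show ?thesis .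
qed

lemma talg_inv:
  assumes "fvs.subspace U" "\<And>v. v \<in> U \<Longrightarrow> adj_op E v \<in> U"
    "\<And>i v. i \<le> 3 \<Longrightarrow> v \<in> U \<Longrightarrow> Estar E x i v \<in> U"
  shows "M \<in> Talg E x \<Longrightarrow> v \<in> U \<Longrightarrow> M v \<in> U"
proof (induction M arbitrary: v rule: Talg.induct)
  case gen_A thus ?case using assms(2) by simp
next
  case (gen_E i) thus ?case using assms(3) by simp
next
  case one thus ?case by simp
next
  case (add M N)
  hence "M v \<in> U" "N v \<in> U" by auto
  hence "M v + N v \<in> U" by (rule fvs.subspace_add[OF assms(1)])
  thus ?case by (simp add: plus_fun_def)
next
  case (smult M c) thus ?case using fvs.subspace_scale[OF assms(1)] by simp
next
  case (mult M N) thus ?case by simp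
qed


lemma real_facts:
  assumes "b + 1 < k" "0 < b"
  shows "tsigma k b > -1" "ttau k b < -1"
    "\<And>l. l = tsigma k b \<or> l = ttau k b \<Longrightarrow>
        2*l^2 - (real k - 2*real b - 3)*l - (real k - real b - 1) = 0"
    "theta1 k b = 2 * tsigma k b + 1"
    "tsigma k b = (theta1 k b + theta2 k b) / 2"
    "ttau k b = (theta2 k b + theta3 k b) / 2"
proof -
  define s where "s = sqrt (tD k b)"
  have tD0: "tD k b \<ge> 0" unfolding tD_def by simp
  have ss: "s * s = tD k b" unfolding s_def using tD0 by simp
  have gap: "tD k b - (real k - 2*real b + 1)^2 = 8 * real b"
    unfolding tD_def by (simp add: algebra_simps power2_eq_square)
  have "(real k - 2*real b + 1)^2 < tD k b" using gap assms(2) by simp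
  hence "sqrt ((real k - 2*real b + 1)^2) < sqrt (tD k b)" by (rule real_sqrt_less_mono)
  hence sgt: "\<bar>real k - 2*real b + 1\<bar> < s" unfolding s_def by simp
  have sg1: "- s < real k - 2*real b + 1" "real k - 2*real b + 1 < s" using sgt by linarith+
  show "tsigma k b > -1" unfolding tsigma_def s_def[symmetric] using sg1 by (simp add: field_simps)
  show "ttau k b < -1" unfolding ttau_def s_def[symmetric] using sg1 by (simp add: field_simps)
  show "2*l^2 - (real k - 2*real b - 3)*l - (real k - real b - 1) = 0"
    if "l = tsigma k b \<or> l = ttau k b" for l
  proof -
    have e: "tD k b = (real k - 2 * real b - 1)\<^sup>2 + 4 * real k" unfolding tD_def ..
    from that consider "l = (real k - 2 * real b - 3 + s) / 4" | "l = (real k - 2 * real b - 3 - s) / 4"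
      unfolding tsigma_def ttau_def s_def by blast
    thus ?thesis
    proof cases
      case 1
      have "2*l^2 - (real k - 2*real b - 3)*l - (real k - real b - 1)
          = (s*s - ((real k - 2 * real b - 1)\<^sup>2 + 4 * real k)) / 8"
        unfolding 1 by (simp add: field_simps power2_eq_square)
      thus ?thesis using ss e by simp
    next
      case 2
      have "2*l^2 - (real k - 2*real b - 3)*l - (real k - real b - 1)
          = (s*s - ((real k - 2 * real b - 1)\<^sup>2 + 4 * real k)) / 8"
        unfolding 2 by (simp add: field_simps power2_eq_square)
      thus ?thesis using ss e by simp
    qed
  qed
  show "theta1 k b = 2 * tsigma k b + 1" unfolding theta1_def tsigma_def by (simp add: field_simps)
  show "tsigma k b = (theta1 k b + theta2 k b) / 2" unfolding theta1_def theta2_def tsigma_def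
    by (simp add: field_simps)
  show "ttau k b = (theta2 k b + theta3 k b) / 2" unfolding theta3_def theta2_def ttau_def
    by (simp add: field_simps)
qed

theorem lemma7p3:
  fixes E :: "'a::finite \<Rightarrow> 'a \<Rightarrow> bool" and k b :: nat and x :: 'a
    and W :: "('a \<Rightarrow> complex) set" and lam :: complex
  assumes "taylor_graph E k b"
    and "irreducible_T_module E x W"
    and "module_endpoint E x W = 1"
    and "lam = complex_of_real (tsigma k b) \<or> lam = complex_of_real (ttau k b)"
    and "has_local_eigenvalue E x W lam"
  shows "module_diameter E x W = 1 \<and> module_thin E x W \<and>
    (\<forall>w0\<in>Estar E x 1 ` W. w0 \<noteq> 0 \<longrightarrow>
       (let w1 = Estar E x 2 (adj_op E w0);
            th = (if lam = complex_of_real (tsigma k b) then theta1 k b else theta2 k b)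
        in w0 \<noteq> w1 \<and> fvs.independent {w0, w1} \<and> fvs.span {w0, w1} = W \<and>
           adj_op E w0 = cscale lam w0 + w1 \<and>
           adj_op E w1 = cscale ((lam - complex_of_real th)\<^sup>2) w0 + cscale lam w1)) \<and>
    tsigma k b = (theta1 k b + theta2 k b) / 2 \<and>
    ttau k b = (theta2 k b + theta3 k b) / 2"
proof -
  interpret T: tay E k b by (rule tay.intro) (rule assms(1))
  note RF = real_facts[OF T.kb T.b_pos]
  obtain l where l: "lam = complex_of_real l" "l = tsigma k b \<or> l = ttau k b" using assms(4) by blast
  have quadR: "2*l^2 - (real k - 2*real b - 3)*l - (real k - real b - 1) = 0" using RF(3) l(2) .
  have quad: "2*lam^2 - (of_nat k - 2*of_nat b - 3)*lam - (of_nat k - of_nat b - 1) = 0"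
  proof -
    have "complex_of_real (2*l^2 - (real k - 2*real b - 3)*l - (real k - real b - 1)) = 0"
      using quadR by simp
    thus ?thesis unfolding l(1) by simp
  qed
  have nl: "1 + lam \<noteq> 0"
  proof -
    have "l \<noteq> -1" using l(2) RF(1,2) by auto
    hence "1 + l \<noteq> 0" by linarith
    hence "complex_of_real (1 + l) \<noteq> 0" by (metis of_real_eq_0_iff)
    thus ?thesis unfolding l(1) of_real_add of_real_1 .
  qed
  have coef: "(lam - complex_of_real (if lam = complex_of_real (tsigma k b) then theta1 k b else theta2 k b))\<^sup>2
      = (1 + lam)^2"
  proof (cases "lam = complex_of_real (tsigma k b)")
    case True
    have th: "complex_of_real (theta1 k b) = 2 * lam + 1" using True unfolding RF(4) by simp
    have "(lam - (2 * lam + 1))^2 = (1 + lam)^2" by (simp add: power2_eq_square algebra_simps)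
    thus ?thesis using True th by simp
  next
    case False thus ?thesis by (simp add: theta2_def add.commute)
  qed
  have TW: "T_module E x W" and Wn0: "W \<noteq> {0}"
    and minl: "\<And>U. T_module E x U \<Longrightarrow> U \<subseteq> W \<Longrightarrow> U = {0} \<or> U = W"
    using assms(2) unfolding irreducible_T_module_def by blast+
  have subW: "fvs.subspace W" using TW unfolding T_module_def by blast
  have invW: "M \<in> Talg E x \<Longrightarrow> v \<in> W \<Longrightarrow> M v \<in> W" for M v
    using TW unfolding T_module_def by blast
  have dimE1: "fvs.dim (Estar E x 1 ` W) = 1"
    and eigW: "\<And>v. v \<in> Estar E x 1 ` W \<Longrightarrow> v \<noteq> 0 \<Longrightarrow>
        Estar E x 1 (adj_op E (Estar E x 1 v)) = cscale lam v"
    using assms(5) unfolding has_local_eigenvalue_def by blast+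
  have E1n0: "Estar E x 1 ` W \<noteq> {0}"
  proof
    assume "Estar E x 1 ` W = {0}"
    hence "fvs.dim (Estar E x 1 ` W) \<le> card ({} :: ('a \<Rightarrow> complex) set)"
      by (intro fvs.dim_le_card) auto
    thus False using dimE1 by simp
  qed
  have W0: "0 \<in> W" using fvs.subspace_0[OF subW] .
  have suppfin: "finite (module_support E x W)" unfolding module_support_def by simp
  have one_in: "1 \<in> module_support E x W" unfolding module_support_def using E1n0 by simp
  have E0W: "Estar E x 0 ` W = {0}"
  proof (rule ccontr)
    assume "Estar E x 0 ` W \<noteq> {0}"
    hence "0 \<in> module_support E x W" unfolding module_support_def by simp
    hence "Min (module_support E x W) \<le> 0" using suppfin by (intro Min_le) auto
    thus False using assms(3) unfolding module_endpoint_def by simp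
  qed
  have key: "adj_op E w0 = cscale lam w0 + Estar E x 2 (adj_op E w0) \<and>
      adj_op E (Estar E x 2 (adj_op E w0)) =
           cscale ((1+lam)^2) w0 + cscale lam (Estar E x 2 (adj_op E w0)) \<and>
      Estar E x 2 (adj_op E w0) \<noteq> 0 \<and>
      fvs.span {w0, Estar E x 2 (adj_op E w0)} = W \<and>
      (\<forall>i. Estar E x i w0 = (if i = 1 then w0 else 0)) \<and>
      (\<forall>i. Estar E x i (Estar E x 2 (adj_op E w0)) = (if i = 2 then Estar E x 2 (adj_op E w0) else 0)) \<and>
      w0 \<noteq> Estar E x 2 (adj_op E w0) \<and> fvs.independent {w0, Estar E x 2 (adj_op E w0)}"
    if w0E: "w0 \<in> Estar E x 1 ` W" and w0n: "w0 \<noteq> 0" for w0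
  proof -
    define w1 where "w1 = Estar E x 2 (adj_op E w0)"
    obtain w where w: "w \<in> W" "w0 = Estar E x 1 w" using w0E by blast
    have w0W: "w0 \<in> W" using invW[OF Talg.gen_E[of 1] w(1)] w(2) by simp
    have supp: "\<And>v. T.d x v \<noteq> 1 \<Longrightarrow> w0 v = 0" using w(2) unfolding Estar_def by simp
    have E1w0: "Estar E x 1 w0 = w0" using supp unfolding Estar_def by (auto simp: fun_eq_iff)
    have eig: "adj_op E w0 t = lam * w0 t" if "T.d x t = 1" for t
    proof -
      have "Estar E x 1 (adj_op E w0) = cscale lam w0" using eigW[OF w0E w0n] E1w0 by simp
      hence "Estar E x 1 (adj_op E w0) t = cscale lam w0 t" by simp
      thus ?thesis using that unfolding Estar_def cscale_def by simp
    qed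
    have s0: "(\<Sum>v\<in>UNIV. w0 v) = 0"
    proof -
      have "Estar E x 0 (adj_op E w0) \<in> Estar E x 0 ` W" using invW[OF Talg.gen_A w0W] by blast
      hence "Estar E x 0 (adj_op E w0) = 0" using E0W by auto
      hence "adj_op E w0 x = 0" unfolding Estar_def by (auto simp: fun_eq_iff dest: spec[of _ x])
      moreover have "adj_op E w0 x = (\<Sum>v\<in>UNIV. w0 v)"
        unfolding T.A_sum by (rule sum.cong) (auto, metis supp T.d1)
      ultimately show ?thesis by simp
    qed
    note M = T.main[of x w0 lam, OF supp s0 eig quad, folded w1_def]
    have w1W: "w1 \<in> W" unfolding w1_def
      by (rule invW[OF Talg.gen_E], simp, rule invW[OF Talg.gen_A w0W])
    have E1: "\<forall>i. Estar E x i w0 = (if i = 1 then w0 else 0)"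
      using supp by (auto simp: Estar_def fun_eq_iff)
    have E2: "\<forall>i. Estar E x i w1 = (if i = 2 then w1 else 0)"
      unfolding w1_def by (auto simp: Estar_def fun_eq_iff)
    have w1n: "w1 \<noteq> 0"
    proof -
      have "Estar E x 2 (adj_op E w0) \<noteq> 0"
        by (rule T.main(3)[of x w0 lam]) (fact supp s0 eig quad w0n nl)+
      thus ?thesis unfolding w1_def .
    qed
    obtain t where t: "w0 t \<noteq> 0" using w0n by (auto simp: fun_eq_iff)
    have t1: "T.d x t = 1" using t supp by blast
    have w1t: "w1 t = 0" unfolding w1_def Estar_def using t1 by simp
    have neq: "w0 \<noteq> w1" using t w1t by auto
    have indep: "fvs.independent {w0, w1}"
    proof -
      have "fvs.independent {w1}" using w1n by (simp add: fvs.independent_insert)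
      moreover have "w0 \<notin> fvs.span {w1}"
      proof
        assume "w0 \<in> fvs.span {w1}"
        then obtain c where "w0 = cscale c w1" by (auto simp: fvs.span_singleton)
        hence "w0 t = c * w1 t" by (simp add: cscale_def)
        thus False using t w1t by simp
      qed
      ultimately show ?thesis using neq by (simp add: fvs.independent_insert)
    qed
    define U where "U = fvs.span {w0, w1}"
    have U2: "U = {cscale a w0 + cscale c w1 | a c. True}" unfolding U_def by (rule span2)
    have subU: "fvs.subspace U" unfolding U_def by simp
    have AU: "adj_op E v \<in> U" if vU: "v \<in> U" for v
    proof -
      obtain a c where v: "v = cscale a w0 + cscale c w1" using vU U2 by auto
      have "adj_op E v = cscale a (cscale lam w0 + w1) + cscale c (cscale ((1+lam)^2) w0 + cscale lam w1)"
        unfolding v adj_lin using M(1,2) by simp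
      also have "\<dots> = cscale (a * lam + c * (1+lam)^2) w0 + cscale (a + c * lam) w1"
        by (simp add: cscale_def fun_eq_iff algebra_simps)
      finally show ?thesis unfolding U2 by blast
    qed
    have EU: "Estar E x i v \<in> U" if vU: "v \<in> U" for i v
    proof -
      obtain a c where v: "v = cscale a w0 + cscale c w1" using vU U2 by auto
      have "Estar E x i v = cscale (if i = 1 then a else 0) w0 + cscale (if i = 2 then c else 0) w1"
        unfolding v est_lin using E1 E2 by (auto simp: cscale_def fun_eq_iff)
      thus ?thesis unfolding U2 by blast
    qed
    have TU: "T_module E x U" unfolding T_module_def
      using subU talg_inv[OF subU AU EU] by blast
    have UW: "U \<subseteq> W" unfolding U_def using w0W w1W subW by (intro fvs.span_minimal) auto
    have "U \<noteq> {0}" using w0n unfolding U_def using fvs.span_base[of w0 "{w0, w1}"] by auto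
    hence UeqW: "U = W" using minl[OF TU UW] by blast
    have UW': "fvs.span {w0, w1} = W" using UeqW unfolding U_def .
    show ?thesis unfolding w1_def[symmetric] using M(1,2) w1n UW' E1 E2 neq indep by blast
  qed
  have "\<exists>v\<in>Estar E x 1 ` W. v \<noteq> 0"
  proof (rule ccontr)
    assume "\<not> (\<exists>v\<in>Estar E x 1 ` W. v \<noteq> 0)"
    hence "Estar E x 1 ` W \<subseteq> {0}" by auto
    moreover have "Estar E x 1 0 \<in> Estar E x 1 ` W" using W0 by (rule imageI)
    moreover have "Estar E x 1 0 = 0" by (simp add: Estar_def fun_eq_iff)
    ultimately have "Estar E x 1 ` W = {0}" by auto
    thus False using E1n0 by simp
  qed
  then obtain w0 where w0: "w0 \<in> Estar E x 1 ` W" "w0 \<noteq> 0" by blast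
  define w1 where "w1 = Estar E x 2 (adj_op E w0)"
  note K = key[OF w0, folded w1_def]
  have WW: "fvs.span {w0, w1} = W" using K by blast
  have KE1: "Estar E x i w0 = (if i = 1 then w0 else 0)" for i using K by blast
  have KE2: "Estar E x i w1 = (if i = 2 then w1 else 0)" for i using K by blast
  have w1n: "w1 \<noteq> 0" using K by blast
  have Wmem: "w \<in> W \<longleftrightarrow> (\<exists>a c. w = cscale a w0 + cscale c w1)" for w
    using WW span2[of w0 w1] by blast
  have Ecomb: "Estar E x i (cscale a w0 + cscale c w1) =
       cscale a (if i = 1 then w0 else 0) + cscale c (if i = 2 then w1 else 0)" for i a c
    unfolding est_lin KE1 KE2 by simp
  have EiW: "v \<in> Estar E x i ` W \<longleftrightarrow>
     (\<exists>a c. v = cscale a (if i = 1 then w0 else 0) + cscale c (if i = 2 then w1 else 0))" for i v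
  proof
    assume "v \<in> Estar E x i ` W"
    then obtain w where wW: "w \<in> W" and vw: "v = Estar E x i w" by blast
    obtain a c where "w = cscale a w0 + cscale c w1" using wW Wmem by blast
    hence "v = Estar E x i (cscale a w0 + cscale c w1)" using vw by simp
    thus "\<exists>a c. v = cscale a (if i = 1 then w0 else 0) + cscale c (if i = 2 then w1 else 0)"
      unfolding Ecomb by blast
  next
    assume "\<exists>a c. v = cscale a (if i = 1 then w0 else 0) + cscale c (if i = 2 then w1 else 0)"
    then obtain a c where "v = Estar E x i (cscale a w0 + cscale c w1)" unfolding Ecomb by blast
    moreover have "cscale a w0 + cscale c w1 \<in> W" using Wmem by blast
    ultimately show "v \<in> Estar E x i ` W" by blast
  qed
  have z: "cscale a (0::'a \<Rightarrow> complex) = 0" for a by (simp add: cscale_def fun_eq_iff)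
  have o: "cscale 1 f = f" for f :: "'a \<Rightarrow> complex" by (simp add: cscale_def)
  have z2: "cscale 0 f = 0" for f :: "'a \<Rightarrow> complex" by (simp add: cscale_def fun_eq_iff)
  have supp: "module_support E x W = {1, 2}"
  proof -
    have "Estar E x i ` W \<noteq> {0} \<longleftrightarrow> i = 1 \<or> i = 2" for i
    proof (cases "i = 1 \<or> i = 2")
      case True
      then consider "i = 1" | "i = 2" by blast
      thus ?thesis
      proof cases
        case 1
        have "w0 = cscale 1 (if i = 1 then w0 else 0) + cscale 0 (if i = 2 then w1 else 0)"
          using 1 o z2 by simp
        hence "w0 \<in> Estar E x i ` W" using EiW by blast
        thus ?thesis using w0 1 by auto
      next
        case 2
        have "w1 = cscale 0 (if i = 1 then w0 else 0) + cscale 1 (if i = 2 then w1 else 0)"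
          using 2 o z2 by simp
        hence "w1 \<in> Estar E x i ` W" using EiW by blast
        thus ?thesis using w1n 2 by auto
      qed
    next
      case False
      have "v = 0" if "v \<in> Estar E x i ` W" for v
        using that False unfolding EiW by (auto simp: z)
      moreover have "Estar E x i 0 \<in> Estar E x i ` W" using W0 by blast
      moreover have "Estar E x i 0 = 0" by (simp add: Estar_def fun_eq_iff)
      ultimately have "Estar E x i ` W = {0}" by auto
      thus ?thesis using False by simp
    qed
    thus ?thesis unfolding module_support_def by auto
  qed
  have diam: "module_diameter E x W = 1" unfolding module_diameter_def supp by simp
  have thin: "module_thin E x W" unfolding module_thin_def
  proof (intro allI impI)
    fix i :: nat assume "i \<le> 3"
    define vi where "vi = (if i = 1 then w0 else if i = 2 then w1 else 0)"
    have "Estar E x i ` W \<subseteq> fvs.span {vi}"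
    proof
      fix v assume "v \<in> Estar E x i ` W"
      then obtain a c where v: "v = cscale a (if i = 1 then w0 else 0) + cscale c (if i = 2 then w1 else 0)"
        unfolding EiW by blast
      have "v = cscale (if i = 1 then a else c) vi" unfolding v vi_def
        by (auto simp: cscale_def fun_eq_iff)
      thus "v \<in> fvs.span {vi}" by (auto simp: fvs.span_singleton)
    qed
    hence "fvs.dim (Estar E x i ` W) \<le> card {vi}" by (intro fvs.dim_le_card) auto
    thus "fvs.dim (Estar E x i ` W) \<le> 1" by simp
  qed
  have allw: "\<forall>w0\<in>Estar E x 1 ` W. w0 \<noteq> 0 \<longrightarrow>
       (let w1 = Estar E x 2 (adj_op E w0);
            th = (if lam = complex_of_real (tsigma k b) then theta1 k b else theta2 k b)
        in w0 \<noteq> w1 \<and> fvs.independent {w0, w1} \<and> fvs.span {w0, w1} = W \<and>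
           adj_op E w0 = cscale lam w0 + w1 \<and>
           adj_op E w1 = cscale ((lam - complex_of_real th)\<^sup>2) w0 + cscale lam w1)"
  proof (intro ballI impI)
    fix v assume "v \<in> Estar E x 1 ` W" "v \<noteq> 0"
    note K' = key[OF this]
    show "let w1 = Estar E x 2 (adj_op E v);
            th = (if lam = complex_of_real (tsigma k b) then theta1 k b else theta2 k b)
        in v \<noteq> w1 \<and> fvs.independent {v, w1} \<and> fvs.span {v, w1} = W \<and>
           adj_op E v = cscale lam v + w1 \<and>
           adj_op E w1 = cscale ((lam - complex_of_real th)\<^sup>2) v + cscale lam w1"
      unfolding Let_def coef using K' by (elim conjE) (intro conjI; assumption)
  qed
  show ?thesis using diam thin allw RF(5,6) by blast
qed

end
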